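(* Consider the following kinetic transport model. Let $\{Z_k\}_{k\ge1}$ be a Markov chain on the two states $\{\mathrm{F},\mathrm{A}\}$ with initial distribution $\lambda=(\lambda_{\mathrm F},\lambda_{\mathrm A})$ and transition matrix $$\begin{pmatrix}1-a & a\\ b & 1-b\end{pmatrix}$$ (rows and columns indexed by $\mathrm F,\mathrm A$), $a,b\in[0,1]$. Let $K_n=\sum_{k=1}^n \mathbf 1_{\{Z_k=\mathrm F\}}$. Independently of $\{Z_k\}$, let $(X_k,Y_k)_{k\ge1}$ be i.i.d. with $$P((X_k,Y_k)=(1,j))=\alpha,\qquad P((X_k,Y_k)=(-1,j))=\beta\qquad (j=\pm1),$$ where $\alpha,\beta\ge0$, $\alpha+\beta=1/2$. Let $\tilde S(n)=(\tilde S_X(n),\tilde S_Y(n))=\sum_{k=1}^{K_n}(X_k+1,Y_k)$ and $n\ge1$. Then the conditional variance $\operatorname{Var}(\tilde S_Y(n)\mid \tilde S_X(n)=2x)$ is an increasing (non-decreasing) function of $x\in\{0,1,\dots,n\}$.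
   Context: Conditional variances are considered for conditioning events of positive probability. *)

theory Defs
  imports "HOL-Probability.Probability"
begin

text \<open>States of the chain: True = F, False = A.
  Path of the chain for steps 2..m+1, given the current state s.
  From F the next state is F with prob 1-a; from A it is F with prob b.\<close>
fun mc_from :: "real \<Rightarrow> real \<Rightarrow> nat \<Rightarrow> bool \<Rightarrow> bool list pmf" where
  "mc_from a b 0 s = return_pmf []"
| "mc_from a b (Suc m) s =
     do { s' \<leftarrow> bernoulli_pmf (if s then 1 - a else b);
          rest \<leftarrow> mc_from a b m s';
          return_pmf (s' # rest) }"

definition markov_path :: "real \<Rightarrow> real \<Rightarrow> real \<Rightarrow> nat \<Rightarrow> bool list pmf" where
  "markov_path lF a b n =
     (if n = 0 then return_pmf []
      else do { z1 \<leftarrow> bernoulli_pmf lF;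
                rest \<leftarrow> mc_from a b (n - 1) z1;
                return_pmf (z1 # rest) })"

definition xy_pmf :: "real \<Rightarrow> real \<Rightarrow> (int \<times> int) pmf" where
  "xy_pmf \<alpha> \<beta> = embed_pmf (\<lambda>(x, y).
      if y = 1 \<or> y = -1 then (if x = 1 then \<alpha> else if x = -1 then \<beta> else 0) else 0)"

text \<open>Joint law of (Z_1..Z_n) and the independent iid sequence (X_k,Y_k)_{k\<le>n}
  (only the first K_n \<le> n steps are ever used).\<close>
definition model :: "real \<Rightarrow> real \<Rightarrow> real \<Rightarrow> real \<Rightarrow> real \<Rightarrow> nat
    \<Rightarrow> (bool list \<times> (int \<times> int) list) pmf" where
  "model lF a b \<alpha> \<beta> n = pair_pmf (markov_path lF a b n) (replicate_pmf n (xy_pmf \<alpha> \<beta>))"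

definition K_n :: "bool list \<Rightarrow> nat" where
  "K_n zs = length (filter id zs)"

definition SX :: "bool list \<times> (int \<times> int) list \<Rightarrow> int" where
  "SX \<omega> = sum_list (map (\<lambda>(x, y). x + 1) (take (K_n (fst \<omega>)) (snd \<omega>)))"

definition SY :: "bool list \<times> (int \<times> int) list \<Rightarrow> int" where
  "SY \<omega> = sum_list (map (\<lambda>(x, y). y) (take (K_n (fst \<omega>)) (snd \<omega>)))"

definition cond_var_SY :: "real \<Rightarrow> real \<Rightarrow> real \<Rightarrow> real \<Rightarrow> real \<Rightarrow> nat \<Rightarrow> nat \<Rightarrow> real" where
  "cond_var_SY lF a b \<alpha> \<beta> n x =
     measure_pmf.variance (cond_pmf (model lF a b \<alpha> \<beta> n) {\<omega>. SX \<omega> = 2 * int x})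
       (\<lambda>\<omega>. real_of_int (SY \<omega>))"

end

theory Submission
  imports Defs
begin

abbreviation E :: "'a pmf \<Rightarrow> ('a \<Rightarrow> real) \<Rightarrow> real" where
  "E p f \<equiv> measure_pmf.expectation p f"

lemma exp_fin:
  assumes "finite (set_pmf p)"
  shows "E p f = (\<Sum>x\<in>set_pmf p. pmf p x * f x)"
  using integral_measure_pmf[OF assms, of p f] by simp

lemma exp_bind:
  assumes fp: "finite (set_pmf p)" and ff: "\<And>x. x \<in> set_pmf p \<Longrightarrow> finite (set_pmf (f x))"
  shows "E (bind_pmf p f) g = E p (\<lambda>x. E (f x) g)"
proof -
  define S where "S = (\<Union>x\<in>set_pmf p. set_pmf (f x))"
  have fS: "finite S" using fp ff unfolding S_def by auto
  have sb: "set_pmf (bind_pmf p f) = S" unfolding S_def by (simp add: set_bind_pmf)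
  have "E (bind_pmf p f) g = (\<Sum>y\<in>S. pmf (bind_pmf p f) y * g y)"
    using exp_fin[of "bind_pmf p f" g] fS sb by simp
  also have "\<dots> = (\<Sum>y\<in>S. (\<Sum>x\<in>set_pmf p. pmf p x * pmf (f x) y) * g y)"
    by (intro sum.cong refl) (simp add: pmf_bind exp_fin[OF fp])
  also have "\<dots> = (\<Sum>x\<in>set_pmf p. pmf p x * (\<Sum>y\<in>S. pmf (f x) y * g y))"
    by (simp add: sum_distrib_left sum_distrib_right mult.assoc sum.swap[of _ S])
  also have "\<dots> = (\<Sum>x\<in>set_pmf p. pmf p x * E (f x) g)"
  proof (intro sum.cong refl)
    fix x assume x: "x \<in> set_pmf p"
    have "E (f x) g = (\<Sum>y\<in>S. pmf (f x) y *\<^sub>R g y)"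
      by (rule integral_measure_pmf[OF fS]) (use x in \<open>auto simp: S_def\<close>)
    then show "pmf p x * (\<Sum>y\<in>S. pmf (f x) y * g y) = pmf p x * E (f x) g" by simp
  qed
  also have "\<dots> = E p (\<lambda>x. E (f x) g)" using exp_fin[OF fp] by simp
  finally show ?thesis .
qed

definition A4 :: "(int \<times> int) set" where "A4 = {(1,1),(1,-1),(-1,1),(-1,-1)}"

lemma binom_tp:
  fixes x y l k :: nat
  assumes "x \<le> y" "y \<le> l" "l \<le> k"
  shows "(l choose y) * (k choose x) \<le> (l choose x) * (k choose y)"
  using assms(3)
proof (induction k rule: dec_induct)
  case base then show ?case by (simp add: mult.commute)
next
  case (step k)
  define a where "a = Suc k - x"
  define b where "b = Suc k - y"
  have ba: "b \<le> a" and b0: "0 < b" using assms step by (auto simp: a_def b_def)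
  have ea: "a * (Suc k choose x) = Suc k * (k choose x)"
    using binomial_absorb_comp[of "Suc k" x] by (simp add: a_def)
  have eb: "b * (Suc k choose y) = Suc k * (k choose y)"
    using binomial_absorb_comp[of "Suc k" y] by (simp add: b_def)
  have "(a * b) * ((l choose y) * (Suc k choose x)) = b * Suc k * ((l choose y) * (k choose x))"
    using ea by (metis mult.assoc mult.left_commute)
  also have "\<dots> \<le> b * Suc k * ((l choose x) * (k choose y))"
    using step.IH by simp
  also have "\<dots> \<le> a * Suc k * ((l choose x) * (k choose y))"
    using mult_le_mono1[OF ba, of "Suc k"] by (rule mult_right_mono) simp
  also have "\<dots> = (a * b) * ((l choose x) * (Suc k choose y))"
    using eb by (metis mult.assoc mult.left_commute)
  finally show ?case using b0 ba by (simp add: mult_le_cancel1)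
qed


locale ab =
  fixes \<alpha> \<beta> :: real
  assumes a0: "\<alpha> \<ge> 0" and b0: "\<beta> \<ge> 0" and ab: "\<alpha> + \<beta> = 1/2"
begin

definition fxy :: "int \<times> int \<Rightarrow> real" where
  "fxy = (\<lambda>(x, y). if y = 1 \<or> y = -1 then (if x = 1 then \<alpha> else if x = -1 then \<beta> else 0) else 0)"

lemma fxy_nonneg: "0 \<le> fxy z" using a0 b0 by (auto simp: fxy_def split: prod.splits)

lemma fxy_prob: "(\<integral>\<^sup>+z. ennreal (fxy z) \<partial>count_space UNIV) = 1"
proof -
  have "(\<integral>\<^sup>+z. ennreal (fxy z) \<partial>count_space UNIV) = (\<Sum>z\<in>A4. ennreal (fxy z))"
    by (rule nn_integral_count_space') (auto simp: A4_def fxy_def split: if_splits)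
  also have "\<dots> = ennreal (\<Sum>z\<in>A4. fxy z)" using fxy_nonneg by (simp add: sum_ennreal)
  also have "(\<Sum>z\<in>A4. fxy z) = 1" using ab by (simp add: A4_def fxy_def)
  finally show ?thesis by simp
qed

lemma pmf_xy: "pmf (xy_pmf \<alpha> \<beta>) z = fxy z"
  unfolding xy_pmf_def fxy_def[symmetric] by (rule pmf_embed_pmf[OF fxy_nonneg fxy_prob])

lemma set_xy: "set_pmf (xy_pmf \<alpha> \<beta>) \<subseteq> A4"
  by (auto simp: set_pmf_iff pmf_xy fxy_def A4_def split: if_splits)

lemma fin_xy: "finite (set_pmf (xy_pmf \<alpha> \<beta>))"
  using set_xy by (rule finite_subset) (simp add: A4_def)

lemma exp_xy: "E (xy_pmf \<alpha> \<beta>) g = \<alpha> * (g (1,1) + g (1,-1)) + \<beta> * (g (-1,1) + g (-1,-1))"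
proof -
  have "E (xy_pmf \<alpha> \<beta>) g = (\<Sum>z\<in>A4. pmf (xy_pmf \<alpha> \<beta>) z *\<^sub>R g z)"
    by (rule integral_measure_pmf) (use set_xy in \<open>auto simp: A4_def\<close>)
  then show ?thesis by (simp add: A4_def pmf_xy fxy_def algebra_simps)
qed


lemma fin_rep: "finite (set_pmf (replicate_pmf k (xy_pmf \<alpha> \<beta>)))"
proof -
  have "set_pmf (replicate_pmf k (xy_pmf \<alpha> \<beta>)) \<subseteq> {xs. set xs \<subseteq> A4 \<and> length xs = k}"
    using set_xy by (auto simp: set_replicate_pmf)
  moreover have "finite {xs. set xs \<subseteq> A4 \<and> length xs = k}"
    by (rule finite_lists_length_eq) (simp add: A4_def)
  ultimately show ?thesis by (rule finite_subset)
qed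

lemma exp_rep_Suc:
  "E (replicate_pmf (Suc k) (xy_pmf \<alpha> \<beta>)) g =
   E (xy_pmf \<alpha> \<beta>) (\<lambda>w. E (replicate_pmf k (xy_pmf \<alpha> \<beta>)) (\<lambda>v. g (w # v)))"
  by (simp add: exp_bind fin_xy fin_rep)

lemma exp_rep_take:
  "k \<le> n \<Longrightarrow> E (replicate_pmf n (xy_pmf \<alpha> \<beta>)) (\<lambda>w. g (take k w)) = E (replicate_pmf k (xy_pmf \<alpha> \<beta>)) g"
proof (induction k arbitrary: n g)
  case 0
  then show ?case by simp
next
  case (Suc k n g)
  then obtain n' where n: "n = Suc n'" "k \<le> n'" by (cases n) auto
  have h: "E (replicate_pmf n' (xy_pmf \<alpha> \<beta>)) (\<lambda>v. g (w # take k v)) = E (replicate_pmf k (xy_pmf \<alpha> \<beta>)) (\<lambda>v. g (w # v))" for w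
    using Suc.IH[OF n(2), where g="\<lambda>u. g (w # u)"] by simp
  show ?case unfolding n exp_rep_Suc by (simp add: h)
qed

lemma integrable_rep[simp]: "integrable (measure_pmf (replicate_pmf k (xy_pmf \<alpha> \<beta>))) (f :: _ \<Rightarrow> real)"
  by (rule integrable_measure_pmf_finite[OF fin_rep])

definition sx :: "(int \<times> int) list \<Rightarrow> int" where
  "sx v = sum_list (map (\<lambda>(x, y). x + 1) v)"
definition sy :: "(int \<times> int) list \<Rightarrow> int" where
  "sy v = sum_list (map (\<lambda>(x, y). y) v)"

lemma sx_Cons[simp]: "sx ((x,y) # v) = x + 1 + sx v" by (simp add: sx_def)
lemma sy_Cons[simp]: "sy ((x,y) # v) = y + sy v" by (simp add: sy_def)
lemma sx_Nil[simp]: "sx [] = 0" by (simp add: sx_def)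
lemma sy_Nil[simp]: "sy [] = 0" by (simp add: sy_def)

definition ind :: "int \<Rightarrow> (int \<times> int) list \<Rightarrow> real" where
  "ind t v = (if sx v = t then 1 else 0)"

lemma ind_shift: "ind t ((x,y) # v) = ind (t - x - 1) v"
  by (auto simp: ind_def)

abbreviation R where "R k \<equiv> replicate_pmf k (xy_pmf \<alpha> \<beta>)"

lemma inner_b: "E (R k) (\<lambda>v. real_of_int (sy v) * ind t v) = 0"
proof (induction k arbitrary: t)
  case 0 then show ?case by simp
next
  case (Suc k)
  have e: "E (R k) (\<lambda>v. real_of_int (c + sy v) * ind t v) = real_of_int c * E (R k) (ind t)" for c t
  proof -
    have "E (R k) (\<lambda>v. real_of_int (c + sy v) * ind t v) = E (R k) (\<lambda>v. real_of_int c * ind t v + real_of_int (sy v) * ind t v)"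
      by (simp add: distrib_right)
    also have "\<dots> = real_of_int c * E (R k) (ind t)"
      by (simp add: integral_add Suc.IH)
    finally show ?thesis .
  qed
  show ?case
    unfolding exp_rep_Suc exp_xy
    by (simp only: sy_Cons ind_shift e) simp
qed

lemma inner_c: "E (R k) (\<lambda>v. (real_of_int (sy v))\<^sup>2 * ind t v) = real k * E (R k) (ind t)"
proof (induction k arbitrary: t)
  case 0 then show ?case by simp
next
  case (Suc k)
  have e: "E (R k) (\<lambda>v. (real_of_int (c + sy v))\<^sup>2 * ind t v) = (1 + real k) * E (R k) (ind t)"
    if c: "c = 1 \<or> c = -1" for c t
  proof -
    have "E (R k) (\<lambda>v. (real_of_int (c + sy v))\<^sup>2 * ind t v) =
       E (R k) (\<lambda>v. ind t v + (2 * real_of_int c) * (real_of_int (sy v) * ind t v) + (real_of_int (sy v))\<^sup>2 * ind t v)"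
      using c by (auto simp: power2_sum algebra_simps)
    also have "\<dots> = E (R k) (ind t) + (2 * real_of_int c) * E (R k) (\<lambda>v. real_of_int (sy v) * ind t v) + E (R k) (\<lambda>v. (real_of_int (sy v))\<^sup>2 * ind t v)"
      by (simp add: integral_add)
    also have "\<dots> = (1 + real k) * E (R k) (ind t)"
      by (simp only: inner_b Suc.IH) (simp add: algebra_simps)
    finally show ?thesis .
  qed
  have e1: "E (R k) (\<lambda>v. (real_of_int (1 + sy v))\<^sup>2 * ind t v) = (1 + real k) * E (R k) (ind t)"
    and e2: "E (R k) (\<lambda>v. (real_of_int (- 1 + sy v))\<^sup>2 * ind t v) = (1 + real k) * E (R k) (ind t)" for t
    by (rule e, simp)+
  show ?case
    unfolding exp_rep_Suc exp_xy
    by (simp only: sy_Cons ind_shift e1 e2) (simp add: algebra_simps)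
qed


definition Bn :: "nat \<Rightarrow> nat \<Rightarrow> real" where
  "Bn k x = real (k choose x) * (2*\<alpha>)^x * (2*\<beta>)^(k-x)"

definition Bi :: "nat \<Rightarrow> int \<Rightarrow> real" where
  "Bi k t = (if t \<ge> 0 \<and> even t then Bn k (nat (t div 2)) else 0)"

lemma Bn_0: "Bn (Suc k) 0 = 2*\<beta> * Bn k 0" by (simp add: Bn_def)

lemma Bn_Suc: "Bn (Suc k) (Suc x) = 2*\<alpha> * Bn k x + 2*\<beta> * Bn k (Suc x)"
proof (cases "Suc x \<le> k")
  case True
  then have e: "Suc k - Suc x = Suc (k - Suc x)" "k - x = Suc (k - Suc x)" by auto
  show ?thesis unfolding Bn_def e by (simp add: algebra_simps)
next
  case False
  then have "k choose Suc x = 0" by simp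
  moreover have "Suc k - Suc x = k - x" by simp
  ultimately show ?thesis unfolding Bn_def by (simp add: algebra_simps)
qed

lemma Bi_2: "Bi k (2 * int x) = Bn k x" by (simp add: Bi_def)

lemma Bi_Suc: "Bi (Suc k) t = 2*\<alpha> * Bi k (t - 2) + 2*\<beta> * Bi k t"
proof (cases "t \<ge> 0 \<and> even t")
  case False
  then show ?thesis by (auto simp: Bi_def)
next
  case True
  then obtain x where t: "t = 2 * int x" by (metis evenE nonneg_int_cases mult_less_cancel_left_pos
        zero_less_numeral linorder_not_le mult_zero_right)
  show ?thesis
  proof (cases x)
    case 0 then show ?thesis by (simp add: Bi_def t Bn_0)
  next
    case (Suc x')
    have "t - 2 = 2 * int x'" using t Suc by simp
    then show ?thesis using Bi_2[of "Suc k" "Suc x'"] Bi_2[of k x'] Bi_2[of k "Suc x'"] Bn_Suc[of k x'] t Suc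
      by simp
  qed
qed

lemma inner_a: "E (R k) (ind t) = Bi k t"
proof (induction k arbitrary: t)
  case 0 then show ?case by (auto simp: ind_def Bi_def Bn_def elim!: evenE)
next
  case (Suc k)
  show ?case
    unfolding exp_rep_Suc exp_xy
    by (simp only: ind_shift Suc.IH Bi_Suc) (simp add: algebra_simps)
qed


lemma Bn_nonneg: "0 \<le> Bn k x" using a0 b0 by (simp add: Bn_def)

lemma Bn_tp:
  assumes "l \<le> k" "x \<le> y"
  shows "Bn l y * Bn k x \<le> Bn l x * Bn k y"
proof (cases "y \<le> l")
  case False
  then have "Bn l y = 0" by (simp add: Bn_def)
  then show ?thesis using Bn_nonneg by simp
next
  case True
  have e1: "(l - y) + (k - x) = (l - x) + (k - y)" using True assms by simp
  have c: "real ((l choose y) * (k choose x)) \<le> real ((l choose x) * (k choose y))"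
    using binom_tp[OF assms(2) True assms(1)] by linarith
  have pw: "0 \<le> (2*\<alpha>)^(x+y) * (2*\<beta>)^((l - x) + (k - y))" using a0 b0 by simp
  have "Bn l y * Bn k x = real ((l choose y) * (k choose x)) * ((2*\<alpha>)^(x+y) * (2*\<beta>)^((l - y) + (k - x)))"
    by (simp add: Bn_def power_add algebra_simps)
  also have "\<dots> = real ((l choose y) * (k choose x)) * ((2*\<alpha>)^(x+y) * (2*\<beta>)^((l - x) + (k - y)))"
    by (simp only: e1)
  also have "\<dots> \<le> real ((l choose x) * (k choose y)) * ((2*\<alpha>)^(x+y) * (2*\<beta>)^((l - x) + (k - y)))"
    using c pw by (rule mult_right_mono)
  also have "\<dots> = Bn l x * Bn k y"
    by (simp add: Bn_def power_add algebra_simps)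
  finally show ?thesis .
qed

lemma h_nonneg:
  assumes "x \<le> y"
  shows "0 \<le> (real k - real l) * (Bn k y * Bn l x - Bn l y * Bn k x)"
proof (cases "l \<le> k")
  case True
  have "Bn l y * Bn k x \<le> Bn k y * Bn l x" using Bn_tp[OF True assms] by (simp add: mult.commute)
  then show ?thesis using True by (intro mult_nonneg_nonneg) auto
next
  case False
  then have "k \<le> l" by simp
  have "Bn k y * Bn l x \<le> Bn l y * Bn k x" using Bn_tp[OF \<open>k \<le> l\<close> assms] by (simp add: mult.commute)
  then show ?thesis using False by (intro mult_nonpos_nonpos) auto
qed

lemma exp_M:
  assumes "finite (set_pmf P)"
  shows "E (pair_pmf P (R n)) F = (\<Sum>z\<in>set_pmf P. pmf P z * E (R n) (\<lambda>w. F (z, w)))"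
  unfolding pair_pmf_def
  by (simp add: exp_bind assms fin_rep exp_fin[OF assms])

lemma SX_eq: "SX (z, w) = sx (take (K_n z) w)" by (simp add: SX_def sx_def)
lemma SY_eq: "SY (z, w) = sy (take (K_n z) w)" by (simp add: SY_def sy_def)

end

lemma cond_exp:
  assumes fin: "finite (set_pmf p)" and ne: "set_pmf p \<inter> s \<noteq> {}"
  shows "E (cond_pmf p s) f = E p (\<lambda>\<omega>. f \<omega> * indicator s \<omega>) / measure_pmf.prob p s"
proof -
  have "E (cond_pmf p s) f = (\<Sum>a\<in>set_pmf p. pmf (cond_pmf p s) a *\<^sub>R f a)"
    by (rule integral_measure_pmf[OF fin]) (use ne in auto)
  also have "\<dots> = (\<Sum>a\<in>set_pmf p. pmf p a * (f a * indicator s a)) / measure_pmf.prob p s"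
    by (auto simp: pmf_cond[OF ne] sum_divide_distrib indicator_def intro!: sum.cong)
  also have "\<dots> = E p (\<lambda>\<omega>. f \<omega> * indicator s \<omega>) / measure_pmf.prob p s"
    by (simp add: exp_fin[OF fin])
  finally show ?thesis .
qed

lemma mc_len: "zs \<in> set_pmf (mc_from a b m s) \<Longrightarrow> length zs = m"
  by (induction m arbitrary: s zs) (auto simp: set_bind_pmf split: if_splits)

lemma mp_len: "z \<in> set_pmf (markov_path lF a b n) \<Longrightarrow> length z = n"
  by (auto simp: markov_path_def set_bind_pmf split: if_splits dest!: mc_len)

lemma mp_fin: "finite (set_pmf (markov_path lF a b n))"
proof -
  have "finite {xs::bool list. set xs \<subseteq> UNIV \<and> length xs = n}"
    by (rule finite_lists_length_eq) simp
  then show ?thesis by (rule finite_subset[rotated]) (auto dest: mp_len)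
qed

lemma K_le: "K_n z \<le> length z" by (simp add: K_n_def)


lemma (in ab) main_var:
  fixes P :: "bool list pmf"
  assumes finP: "finite (set_pmf P)" and lenP': "\<forall>z\<in>set_pmf P. length z = n"
    and pos: "measure_pmf.prob (pair_pmf P (R n)) {\<omega>. SX \<omega> = 2 * int t} > 0"
  shows "measure_pmf.prob (pair_pmf P (R n)) {\<omega>. SX \<omega> = 2 * int t} = (\<Sum>z\<in>set_pmf P. pmf P z * Bn (K_n z) t)"
    and "measure_pmf.variance (cond_pmf (pair_pmf P (R n)) {\<omega>. SX \<omega> = 2 * int t}) (\<lambda>\<omega>. real_of_int (SY \<omega>))
         = (\<Sum>z\<in>set_pmf P. pmf P z * (real (K_n z) * Bn (K_n z) t)) / (\<Sum>z\<in>set_pmf P. pmf P z * Bn (K_n z) t)"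
proof -
  have lenP: "length z = n" if "z \<in> set_pmf P" for z using lenP' that by blast
  define M where "M = pair_pmf P (R n)"
  define A where "A = {\<omega>. SX \<omega> = 2 * int t}"
  have finM: "finite (set_pmf M)" using finP fin_rep by (simp add: M_def)
  have ne: "set_pmf M \<inter> A \<noteq> {}" using pos measure_pmf_zero_iff[of M A] by (auto simp: M_def A_def)
  have Kle: "K_n z \<le> n" if "z \<in> set_pmf P" for z using K_le[of z] lenP[OF that] by simp
  have ie: "(\<lambda>w. h w * indicator A (z, w)) = (\<lambda>w. (\<lambda>v. h' v * ind (2 * int t) v) (take (K_n z) w))"
    if "\<And>w. h w = h' (take (K_n z) w)" for z h h'
    using that by (auto simp: fun_eq_iff ind_def SX_eq indicator_def A_def)
  have p1: "measure_pmf.prob M A = (\<Sum>z\<in>set_pmf P. pmf P z * Bn (K_n z) t)"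
  proof -
    have "measure_pmf.prob M A = E M (\<lambda>\<omega>. 1 * indicator A \<omega>)"
      by (simp add: measure_pmf.emeasure_eq_measure)
    also have "\<dots> = (\<Sum>z\<in>set_pmf P. pmf P z * E (R n) (\<lambda>w. 1 * indicator A (z, w)))"
      unfolding M_def by (rule exp_M[OF finP])
    also have "\<dots> = (\<Sum>z\<in>set_pmf P. pmf P z * Bn (K_n z) t)"
    proof (intro sum.cong refl)
      fix z assume z: "z \<in> set_pmf P"
      have "E (R n) (\<lambda>w. 1 * indicator A (z, w)) = E (R n) (\<lambda>w. (\<lambda>v. 1 * ind (2 * int t) v) (take (K_n z) w))"
        by (subst ie[where h' = "\<lambda>_. 1"]) simp_all
      also have "\<dots> = Bn (K_n z) t"
        using exp_rep_take[OF Kle[OF z], of "\<lambda>v. 1 * ind (2 * int t) v"] by (simp add: inner_a Bi_2)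
      finally show "pmf P z * E (R n) (\<lambda>w. 1 * indicator A (z, w)) = pmf P z * Bn (K_n z) t" by simp
    qed
    finally show ?thesis .
  qed
  have p2: "E M (\<lambda>\<omega>. real_of_int (SY \<omega>) * indicator A \<omega>) = 0"
  proof -
    have "E M (\<lambda>\<omega>. real_of_int (SY \<omega>) * indicator A \<omega>) = (\<Sum>z\<in>set_pmf P. pmf P z * E (R n) (\<lambda>w. real_of_int (SY (z, w)) * indicator A (z, w)))"
      unfolding M_def by (rule exp_M[OF finP])
    also have "\<dots> = 0"
    proof (intro sum.neutral ballI)
      fix z assume z: "z \<in> set_pmf P"
      have "E (R n) (\<lambda>w. real_of_int (SY (z, w)) * indicator A (z, w)) = E (R n) (\<lambda>w. (\<lambda>v. real_of_int (sy v) * ind (2 * int t) v) (take (K_n z) w))"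
        by (subst ie[where h' = "\<lambda>v. real_of_int (sy v)"]) (simp_all add: SY_eq)
      also have "\<dots> = 0"
        using exp_rep_take[OF Kle[OF z], of "\<lambda>v. real_of_int (sy v) * ind (2 * int t) v"] by (simp add: inner_b)
      finally show "pmf P z * E (R n) (\<lambda>w. real_of_int (SY (z, w)) * indicator A (z, w)) = 0" by simp
    qed
    finally show ?thesis .
  qed
  have p3: "E M (\<lambda>\<omega>. (real_of_int (SY \<omega>))\<^sup>2 * indicator A \<omega>) = (\<Sum>z\<in>set_pmf P. pmf P z * (real (K_n z) * Bn (K_n z) t))"
  proof -
    have "E M (\<lambda>\<omega>. (real_of_int (SY \<omega>))\<^sup>2 * indicator A \<omega>) = (\<Sum>z\<in>set_pmf P. pmf P z * E (R n) (\<lambda>w. (real_of_int (SY (z, w)))\<^sup>2 * indicator A (z, w)))"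
      unfolding M_def by (rule exp_M[OF finP])
    also have "\<dots> = (\<Sum>z\<in>set_pmf P. pmf P z * (real (K_n z) * Bn (K_n z) t))"
    proof (intro sum.cong refl)
      fix z assume z: "z \<in> set_pmf P"
      have "E (R n) (\<lambda>w. (real_of_int (SY (z, w)))\<^sup>2 * indicator A (z, w)) = E (R n) (\<lambda>w. (\<lambda>v. (real_of_int (sy v))\<^sup>2 * ind (2 * int t) v) (take (K_n z) w))"
        by (subst ie[where h' = "\<lambda>v. (real_of_int (sy v))\<^sup>2"]) (simp_all add: SY_eq)
      also have "\<dots> = real (K_n z) * Bn (K_n z) t"
        using exp_rep_take[OF Kle[OF z], of "\<lambda>v. (real_of_int (sy v))\<^sup>2 * ind (2 * int t) v"] by (simp add: inner_c inner_a Bi_2)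
      finally show "pmf P z * E (R n) (\<lambda>w. (real_of_int (SY (z, w)))\<^sup>2 * indicator A (z, w)) = pmf P z * (real (K_n z) * Bn (K_n z) t)" by simp
    qed
    finally show ?thesis .
  qed
  have m0: "E (cond_pmf M A) (\<lambda>\<omega>. real_of_int (SY \<omega>)) = 0"
    using cond_exp[OF finM ne] p2 by simp
  have "measure_pmf.variance (cond_pmf M A) (\<lambda>\<omega>. real_of_int (SY \<omega>)) = E (cond_pmf M A) (\<lambda>\<omega>. (real_of_int (SY \<omega>))\<^sup>2)"
    by (simp add: m0)
  also have "\<dots> = (\<Sum>z\<in>set_pmf P. pmf P z * (real (K_n z) * Bn (K_n z) t)) / (\<Sum>z\<in>set_pmf P. pmf P z * Bn (K_n z) t)"
    using cond_exp[OF finM ne] p3 p1 by simp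
  finally show "measure_pmf.variance (cond_pmf (pair_pmf P (R n)) {\<omega>. SX \<omega> = 2 * int t}) (\<lambda>\<omega>. real_of_int (SY \<omega>))
         = (\<Sum>z\<in>set_pmf P. pmf P z * (real (K_n z) * Bn (K_n z) t)) / (\<Sum>z\<in>set_pmf P. pmf P z * Bn (K_n z) t)"
    by (simp add: M_def A_def)
  show "measure_pmf.prob (pair_pmf P (R n)) {\<omega>. SX \<omega> = 2 * int t} = (\<Sum>z\<in>set_pmf P. pmf P z * Bn (K_n z) t)"
    using p1 by (simp add: M_def A_def)
qed


lemma (in ab) ratio_mono:
  fixes S :: "'c set" and p :: "'c \<Rightarrow> real" and K :: "'c \<Rightarrow> nat"
  assumes p0: "\<And>z. z \<in> S \<Longrightarrow> 0 \<le> p z" and xy: "x \<le> y"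
    and Dx: "(\<Sum>z\<in>S. p z * Bn (K z) x) > 0" and Dy: "(\<Sum>z\<in>S. p z * Bn (K z) y) > 0"
  shows "(\<Sum>z\<in>S. p z * (real (K z) * Bn (K z) x)) / (\<Sum>z\<in>S. p z * Bn (K z) x)
       \<le> (\<Sum>z\<in>S. p z * (real (K z) * Bn (K z) y)) / (\<Sum>z\<in>S. p z * Bn (K z) y)"
proof -
  define Nx where "Nx = (\<Sum>z\<in>S. p z * (real (K z) * Bn (K z) x))"
  define Ny where "Ny = (\<Sum>z\<in>S. p z * (real (K z) * Bn (K z) y))"
  define DX where "DX = (\<Sum>z\<in>S. p z * Bn (K z) x)"
  define DY where "DY = (\<Sum>z\<in>S. p z * Bn (K z) y)"
  define F where "F z w = p z * (real (K z) * Bn (K z) y) * (p w * Bn (K w) x)" for z w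
  define G where "G z w = p w * (real (K w) * Bn (K w) x) * (p z * Bn (K z) y)" for z w
  have 1: "Ny * DX = (\<Sum>z\<in>S. \<Sum>w\<in>S. F z w)"
    unfolding Ny_def DX_def F_def by (rule sum_product)
  have 2: "Nx * DY = (\<Sum>z\<in>S. \<Sum>w\<in>S. G z w)"
    unfolding Nx_def DY_def G_def by (subst sum_product) (rule sum.swap)
  have d1: "Ny * DX - Nx * DY = (\<Sum>z\<in>S. \<Sum>w\<in>S. F z w - G z w)"
    by (simp add: 1 2 sum_subtractf)
  also have "\<dots> = (\<Sum>z\<in>S. \<Sum>w\<in>S. F w z - G w z)" by (rule sum.swap)
  finally have d2: "Ny * DX - Nx * DY = (\<Sum>z\<in>S. \<Sum>w\<in>S. F w z - G w z)" .
  have "2 * (Ny * DX - Nx * DY) = (\<Sum>z\<in>S. \<Sum>w\<in>S. F z w - G z w) + (\<Sum>z\<in>S. \<Sum>w\<in>S. F w z - G w z)"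
    by (simp only: d1[symmetric] d2[symmetric]) simp
  also have "\<dots> = (\<Sum>z\<in>S. \<Sum>w\<in>S. (F z w - G z w) + (F w z - G w z))"
    by (simp add: sum.distrib)
  also have "\<dots> = (\<Sum>z\<in>S. \<Sum>w\<in>S. (p z * p w) * ((real (K z) - real (K w)) * (Bn (K z) y * Bn (K w) x - Bn (K w) y * Bn (K z) x)))"
    by (intro sum.cong refl) (simp add: F_def G_def algebra_simps)
  also have "\<dots> \<ge> 0"
  proof (intro sum_nonneg)
    fix z w assume "z \<in> S" "w \<in> S"
    then show "0 \<le> (p z * p w) * ((real (K z) - real (K w)) * (Bn (K z) y * Bn (K w) x - Bn (K w) y * Bn (K z) x))"
      by (intro mult_nonneg_nonneg[OF mult_nonneg_nonneg[OF p0 p0] h_nonneg[OF xy]])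
  qed
  finally have "Nx * DY \<le> Ny * DX" by simp
  then show ?thesis
    using Dx Dy unfolding Nx_def[symmetric] Ny_def[symmetric] DX_def[symmetric] DY_def[symmetric]
    by (simp add: divide_simps mult.commute)
qed

theorem proposition5:
  fixes lF lA a b \<alpha> \<beta> :: real and n x y :: nat
  assumes "lF \<ge> 0" "lA \<ge> 0" "lF + lA = 1"
    and "0 \<le> a" "a \<le> 1" "0 \<le> b" "b \<le> 1"
    and "\<alpha> \<ge> 0" "\<beta> \<ge> 0" "\<alpha> + \<beta> = 1/2"
    and "n \<ge> 1"
    and "x \<le> y" "y \<le> n"
    and "measure_pmf.prob (model lF a b \<alpha> \<beta> n) {\<omega>. SX \<omega> = 2 * int x} > 0"
    and "measure_pmf.prob (model lF a b \<alpha> \<beta> n) {\<omega>. SX \<omega> = 2 * int y} > 0"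
  shows "cond_var_SY lF a b \<alpha> \<beta> n x \<le> cond_var_SY lF a b \<alpha> \<beta> n y"
proof -
  interpret ab \<alpha> \<beta> using assms by unfold_locales auto
  define P where "P = markov_path lF a b n"
  have finP: "finite (set_pmf P)" unfolding P_def by (rule mp_fin)
  have lenP: "\<forall>z\<in>set_pmf P. length z = n" unfolding P_def using mp_len by blast
  have M: "model lF a b \<alpha> \<beta> n = pair_pmf P (R n)" by (simp add: model_def P_def)
  note vx = main_var[OF finP lenP, of x] and vy = main_var[OF finP lenP, of y]
  have px: "measure_pmf.prob (pair_pmf P (R n)) {\<omega>. SX \<omega> = 2 * int x} > 0"
    and py: "measure_pmf.prob (pair_pmf P (R n)) {\<omega>. SX \<omega> = 2 * int y} > 0"
    using assms(14,15) by (simp_all add: M)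
  show ?thesis
    unfolding cond_var_SY_def M vx(2)[OF px] vy(2)[OF py]
    using ratio_mono[of "set_pmf P" "pmf P" x y K_n] assms(12) vx(1)[OF px] vy(1)[OF py] px py
    by simp
qed

end
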